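(* In the Heston model described in the context, for every $t>0$ the characteristic function $\psi_t(\xi):=\mathbb{E}_{\mathbb{Q}}\exp(i\xi\log S_t)=\exp\bigl(A(\xi,t)+B(\xi,t)v_0\bigr)$ of $\log S_t$ belongs to $L^p(\mathbb{R})$ for every $p\in[1,\infty]$.
   Context: Let $v_0,\kappa,\theta,\eta\in(0,\infty)$ with $2\kappa\theta>\eta^2$ (Feller condition) and $\rho\in(-1,1)$. Under a probability measure $\mathbb{Q}$, $W=(W^1,W^2)$ is a two-dimensional Wiener process with $\langle W^1,W^2\rangle_t=\rho t$, and $(S,v)$ is the unique solution of $S_t=1+\int_0^t\sqrt{v_s}S_s\,dW^1_s$, $v_t=v_0+\int_0^t\kappa(\theta-v_s)\,ds+\int_0^t\eta\sqrt{v_s}\,dW^2_s$ (so $S_0=1$, no dividends). The characteristic function of $\log S_t$ is $\exp(A(\xi,t)+B(\xi,t)v_0)$ where, with $\widehat\alpha(\xi):=-\frac12\xi(\xi+i)$, $\beta(\xi):=\kappa-i\eta\rho\xi$, $\gamma:=\eta^2/2$, $D:=(\beta^2-4\gamma\widehat\alpha)^{1/2}$, $G:=\frac{\beta-D}{\beta+D}$, \[ A(\xi,t)=\frac{\kappa\theta}{\eta^2}\Bigl((\beta+D)t-2\log\frac{e^{Dt}-G}{1-G}\Bigr),\qquad B(\xi,t)=\frac{\beta-D}{\eta^2}\,\frac{1-e^{-Dt}}{1-Ge^{-Dt}}, \] all functions of $\xi$ evaluated at $\xi$. For $z=|z|(\cos\vartheta+i\sin\vartheta)$, $\vartheta\in[-\pi,\pi)$: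 $z^{1/2}:=|z|^{1/2}(\cos(\vartheta/2)+i\sin(\vartheta/2))$, $\log z:=\log|z|+i\vartheta$. *)

theory Defs
  imports "HOL-Analysis.Analysis"
begin

text \<open>Argument of a complex number normalised to the range [-pi, pi), as in the paper.
  (The library's Arg has range (-pi, pi].)\<close>
definition parg :: "complex \<Rightarrow> real" where
  "parg z = (if Arg z = pi then - pi else Arg z)"

definition psqrt :: "complex \<Rightarrow> complex" where
  "psqrt z = complex_of_real (sqrt (cmod z)) * cis (parg z / 2)"

definition plog :: "complex \<Rightarrow> complex" where
  "plog z = complex_of_real (ln (cmod z)) + \<i> * complex_of_real (parg z)"

definition heston_alpha :: "real \<Rightarrow> complex" where
  "heston_alpha \<xi> = - (1/2) * complex_of_real \<xi> * (complex_of_real \<xi> + \<i>)"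

definition heston_beta :: "real \<Rightarrow> real \<Rightarrow> real \<Rightarrow> real \<Rightarrow> complex" where
  "heston_beta \<kappa> \<eta> \<rho> \<xi> = complex_of_real \<kappa> - \<i> * complex_of_real (\<eta> * \<rho> * \<xi>)"

definition heston_gamma :: "real \<Rightarrow> real" where
  "heston_gamma \<eta> = \<eta>\<^sup>2 / 2"

definition heston_D :: "real \<Rightarrow> real \<Rightarrow> real \<Rightarrow> real \<Rightarrow> complex" where
  "heston_D \<kappa> \<eta> \<rho> \<xi> =
     psqrt ((heston_beta \<kappa> \<eta> \<rho> \<xi>)\<^sup>2 - 4 * complex_of_real (heston_gamma \<eta>) * heston_alpha \<xi>)"

definition heston_G :: "real \<Rightarrow> real \<Rightarrow> real \<Rightarrow> real \<Rightarrow> complex" where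
  "heston_G \<kappa> \<eta> \<rho> \<xi> =
     (heston_beta \<kappa> \<eta> \<rho> \<xi> - heston_D \<kappa> \<eta> \<rho> \<xi>) / (heston_beta \<kappa> \<eta> \<rho> \<xi> + heston_D \<kappa> \<eta> \<rho> \<xi>)"

definition heston_A :: "real \<Rightarrow> real \<Rightarrow> real \<Rightarrow> real \<Rightarrow> real \<Rightarrow> real \<Rightarrow> complex" where
  "heston_A \<kappa> \<theta> \<eta> \<rho> \<xi> t =
     (let \<beta> = heston_beta \<kappa> \<eta> \<rho> \<xi>; D = heston_D \<kappa> \<eta> \<rho> \<xi>; G = heston_G \<kappa> \<eta> \<rho> \<xi> in
      complex_of_real (\<kappa> * \<theta> / \<eta>\<^sup>2) *
        ((\<beta> + D) * complex_of_real t - 2 * plog ((exp (D * complex_of_real t) - G) / (1 - G))))"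

definition heston_B :: "real \<Rightarrow> real \<Rightarrow> real \<Rightarrow> real \<Rightarrow> real \<Rightarrow> complex" where
  "heston_B \<kappa> \<eta> \<rho> \<xi> t =
     (let \<beta> = heston_beta \<kappa> \<eta> \<rho> \<xi>; D = heston_D \<kappa> \<eta> \<rho> \<xi>; G = heston_G \<kappa> \<eta> \<rho> \<xi> in
      (\<beta> - D) / complex_of_real (\<eta>\<^sup>2) *
        ((1 - exp (- D * complex_of_real t)) / (1 - G * exp (- D * complex_of_real t))))"

definition heston_cf :: "real \<Rightarrow> real \<Rightarrow> real \<Rightarrow> real \<Rightarrow> real \<Rightarrow> real \<Rightarrow> real \<Rightarrow> complex" where
  "heston_cf v0 \<kappa> \<theta> \<eta> \<rho> t \<xi> =
     exp (heston_A \<kappa> \<theta> \<eta> \<rho> \<xi> t + heston_B \<kappa> \<eta> \<rho> \<xi> t * complex_of_real v0)"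

definition memLp :: "ennreal \<Rightarrow> (real \<Rightarrow> complex) \<Rightarrow> bool" where
  "memLp p f \<longleftrightarrow> f \<in> borel_measurable lborel \<and>
     (if p = \<infinity> then (\<exists>C. AE x in lborel. cmod (f x) \<le> C)
      else integrable lborel (\<lambda>x. cmod (f x) powr (enn2real p)))"

end

theory Submission
  imports Defs "HOL-Complex_Analysis.Cauchy_Integral_Theorem" "HOL-Probability.Sinc_Integral"
begin


lemma cmp_deriv:
  fixes f g f' g' :: "real \<Rightarrow> real"
  assumes "0 \<le> T"
    and "\<And>s. 0 \<le> s \<Longrightarrow> s \<le> T \<Longrightarrow> (f has_real_derivative f' s) (at s)"
    and "\<And>s. 0 \<le> s \<Longrightarrow> s \<le> T \<Longrightarrow> (g has_real_derivative g' s) (at s)"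
    and "\<And>s. 0 \<le> s \<Longrightarrow> s \<le> T \<Longrightarrow> g' s \<le> f' s"
    and "g 0 \<le> f 0"
  shows "g T \<le> f T"
proof -
  have "(\<lambda>x. g x - f x) T \<le> (\<lambda>x. g x - f x) 0"
    by (rule deriv_nonpos_imp_antimono[where g'="\<lambda>s. g' s - f' s"])
       (use assms in \<open>auto intro!: derivative_intros\<close>)
  then show ?thesis using assms(5) by simp
qed

locale hp =
  fixes \<kappa> \<eta> \<rho> \<xi> :: real and \<beta> D w :: complex
  assumes eta: "\<eta> > 0" and kap: "\<kappa> > 0" and rho: "\<bar>\<rho>\<bar> < 1"
    and beta: "\<beta> = Complex \<kappa> (-(\<eta>*\<rho>*\<xi>))" and w: "w = Complex (\<xi>^2) \<xi>"
    and D2: "D^2 = \<beta>^2 + of_real (\<eta>^2) * w" and Dnz: "D \<noteq> 0"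
begin

definition Rf :: "complex \<Rightarrow> complex" where
  "Rf u = ((\<beta>+D)*exp(D*u/2) - (\<beta>-D)*exp(-(D*u/2)))/(2*D)"
definition Pf :: "complex \<Rightarrow> complex" where
  "Pf u = -w*(exp(D*u/2) - exp(-(D*u/2)))/(2*D)"
definition Rd :: "complex \<Rightarrow> complex" where
  "Rd u = ((\<beta>+D)*exp(D*u/2) + (\<beta>-D)*exp(-(D*u/2)))/4"
definition Pd :: "complex \<Rightarrow> complex" where
  "Pd u = -w*(exp(D*u/2) + exp(-(D*u/2)))/4"

lemma Rf_deriv: "(Rf has_field_derivative Rd u) (at u)"
  unfolding Rf_def[abs_def] Rd_def using Dnz
  by (auto intro!: derivative_eq_intros simp: field_simps)

lemma Pf_deriv: "(Pf has_field_derivative Pd u) (at u)"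
  unfolding Pf_def[abs_def] Pd_def using Dnz
  by (auto intro!: derivative_eq_intros simp: field_simps)

lemma w_eq: "w = (D^2 - \<beta>^2) / of_real (\<eta>^2)"
  using D2 eta by (simp add: field_simps)

lemma Rd_eq: "Rd u = - of_real (\<eta>^2/2) * Pf u + \<beta>/2 * Rf u"
  unfolding Rf_def Pf_def Rd_def using Dnz eta
  by (simp add: w_eq field_simps power2_eq_square)

lemma Pd_eq: "Pd u = - \<beta>/2 * Pf u - w/2 * Rf u"
  unfolding Rf_def Pf_def Pd_def using Dnz
  by (simp add: field_simps)

definition R :: "real \<Rightarrow> complex" where "R s = Rf (of_real s)"
definition P :: "real \<Rightarrow> complex" where "P s = Pf (of_real s)"
definition y :: "real \<Rightarrow> real" where "y s = (Re (R s))^2 + (Im (R s))^2"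
definition ps :: "real \<Rightarrow> real" where "ps s = Re (P s) * Re (R s) + Im (P s) * Im (R s)"

lemma R0: "R 0 = 1" unfolding R_def Rf_def using Dnz by (simp add: field_simps)
lemma P0: "P 0 = 0" unfolding P_def Pf_def by simp
lemma y0: "y 0 = 1" unfolding y_def by (simp add: R0)
lemma ps0: "ps 0 = 0" unfolding ps_def by (simp add: P0)

lemma R_vderiv: "(R has_vector_derivative Rd (of_real s)) (at s within S)"
  unfolding R_def[abs_def] by (rule has_vector_derivative_real_field[OF Rf_deriv])
lemma P_vderiv: "(P has_vector_derivative Pd (of_real s)) (at s within S)"
  unfolding P_def[abs_def] by (rule has_vector_derivative_real_field[OF Pf_deriv])
lemma Reb: "Re \<beta> = \<kappa>" and Imb: "Im \<beta> = -(\<eta>*\<rho>*\<xi>)" and Rew: "Re w = \<xi>^2" and Imw: "Im w = \<xi>"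
  using beta w by auto

lemma ReRd: "Re (Rd (of_real s)) = -(\<eta>^2/2) * Re (P s) + (\<kappa> * Re (R s) + \<eta>*\<rho>*\<xi> * Im (R s))/2"
  unfolding Rd_eq R_def P_def by (simp add: field_simps Reb Imb)
lemma ImRd: "Im (Rd (of_real s)) = -(\<eta>^2/2) * Im (P s) + (\<kappa> * Im (R s) - \<eta>*\<rho>*\<xi> * Re (R s))/2"
  unfolding Rd_eq R_def P_def by (simp add: field_simps Reb Imb)
lemma RePd: "Re (Pd (of_real s)) = -(\<kappa> * Re (P s) + \<eta>*\<rho>*\<xi> * Im (P s))/2 - (\<xi>^2 * Re (R s) - \<xi> * Im (R s))/2"
  unfolding Pd_eq R_def P_def by (simp add: field_simps Reb Imb Rew Imw)
lemma ImPd: "Im (Pd (of_real s)) = -(\<kappa> * Im (P s) - \<eta>*\<rho>*\<xi> * Re (P s))/2 - (\<xi>^2 * Im (R s) + \<xi> * Re (R s))/2"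
  unfolding Pd_eq R_def P_def by (simp add: field_simps Reb Imb Rew Imw)

lemma y_deriv: "(y has_real_derivative (\<kappa> * y s - \<eta>^2 * ps s)) (at s)"
proof -
  have "(y has_real_derivative (2 * Re (R s) * Re (Rd (of_real s)) + 2 * Im (R s) * Im (Rd (of_real s)))) (at s)"
    unfolding y_def[abs_def]
    by (auto intro!: derivative_eq_intros R_vderiv)
  then show ?thesis by (rule DERIV_cong) (simp add: ReRd ImRd y_def ps_def field_simps power2_eq_square)
qed

lemma ps_deriv: "(ps has_real_derivative
   (\<eta>*\<rho>*\<xi>*(Re (P s) * Im (R s) - Im (P s) * Re (R s)) - \<xi>^2 * y s / 2
     - \<eta>^2 * ((Re (P s))^2 + (Im (P s))^2) / 2)) (at s)"
proof -
  have "(ps has_real_derivative (Re (Pd (of_real s)) * Re (R s) + Re (P s) * Re (Rd (of_real s))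
      + Im (Pd (of_real s)) * Im (R s) + Im (P s) * Im (Rd (of_real s)))) (at s)"
    unfolding ps_def[abs_def]
    by (auto intro!: derivative_eq_intros R_vderiv P_vderiv)
  then show ?thesis by (rule DERIV_cong) (simp add: ReRd ImRd RePd ImPd y_def field_simps power2_eq_square)
qed

definition k :: real where "k = (1 - \<bar>\<rho>\<bar>)/2 * \<xi>^2"

lemma k_nonneg: "0 \<le> k" unfolding k_def using rho by auto

lemma y_nonneg: "0 \<le> y s" unfolding y_def by simp

definition zd :: "real \<Rightarrow> real" where
  "zd s = -(\<eta>*\<rho>*\<xi>*(Re (P s) * Im (R s) - Im (P s) * Re (R s))) + \<xi>^2 * y s / 2
     + \<eta>^2 * ((Re (P s))^2 + (Im (P s))^2) / 2"

lemma zz_deriv: "((\<lambda>s. - ps s) has_real_derivative zd s) (at s)"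
  by (rule DERIV_cong[OF DERIV_minus[OF ps_deriv[of s]]]) (simp add: zd_def algebra_simps)

lemma zd_lower: "k * y s \<le> zd s"
proof -
  define p1 where "p1 = Re (P s)" define p2 where "p2 = Im (P s)"
  define r1 where "r1 = Re (R s)" define r2 where "r2 = Im (R s)"
  define X where "X = \<eta>*\<xi>*(p1*r2 - p2*r1)"
  define Q where "Q = \<xi>^2 * (r1^2+r2^2) + \<eta>^2*(p1^2+p2^2)"
  have e1: "Q - 2*X = (\<xi>*r2 - \<eta>*p1)^2 + (\<xi>*r1 + \<eta>*p2)^2"
    unfolding Q_def X_def by (simp add: power2_eq_square algebra_simps)
  have e2: "Q + 2*X = (\<xi>*r2 + \<eta>*p1)^2 + (\<xi>*r1 - \<eta>*p2)^2"
    unfolding Q_def X_def by (simp add: power2_eq_square algebra_simps)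
  have q1: "0 \<le> Q - 2*X" unfolding e1 by simp
  have q2: "0 \<le> Q + 2*X" unfolding e2 by simp
  have aX: "\<bar>X\<bar> \<le> Q/2" using q1 q2 by linarith
  have "\<rho> * X \<le> \<bar>\<rho> * X\<bar>" by (rule abs_ge_self)
  also have "\<dots> = \<bar>\<rho>\<bar> * \<bar>X\<bar>" by (rule abs_mult)
  also have "\<dots> \<le> \<bar>\<rho>\<bar> * (Q/2)" using aX by (intro mult_left_mono) auto
  finally have rX: "\<rho> * X \<le> \<bar>\<rho>\<bar> * (Q/2)" .
  have Qge: "\<xi>^2 * (r1^2+r2^2) \<le> Q" unfolding Q_def by simp
  have "\<bar>\<rho>\<bar> \<le> 1" using rho by simp
  then have "(1 - \<bar>\<rho>\<bar>)/2 * (\<xi>^2 * (r1^2+r2^2)) \<le> (1 - \<bar>\<rho>\<bar>)/2 * Q"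
    using Qge by (intro mult_left_mono) auto
  then have "(1 - \<bar>\<rho>\<bar>)/2 * (\<xi>^2 * (r1^2+r2^2)) \<le> -(\<rho>*X) + Q/2"
    using rX by (simp add: algebra_simps)
  moreover have "k * y s = (1 - \<bar>\<rho>\<bar>)/2 * (\<xi>^2 * (r1^2+r2^2))"
    by (simp add: k_def y_def r1_def r2_def)
  moreover have "zd s = -(\<rho>*X) + Q/2"
    by (simp add: zd_def X_def Q_def p1_def p2_def r1_def r2_def y_def field_simps)
  ultimately show ?thesis by simp
qed

lemma S1: "0 \<le> s \<Longrightarrow> 0 \<le> - ps s"
proof -
  assume s: "0 \<le> s"
  have "(\<lambda>_. 0::real) s \<le> (\<lambda>s. - ps s) s"
  proof (rule cmp_deriv[of s "\<lambda>s. - ps s" zd "\<lambda>_. 0" "\<lambda>_. 0"])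
    fix u show "0 \<le> zd u" using zd_lower[of u] k_nonneg y_nonneg[of u]
      by (meson mult_nonneg_nonneg order_trans)
  qed (use s zz_deriv ps0 in auto)
  then show ?thesis by simp
qed

lemma S2: "0 \<le> s \<Longrightarrow> 1 \<le> y s"
proof -
  assume s: "0 \<le> s"
  have "(\<lambda>_. 1) s \<le> y s"
  proof (rule cmp_deriv[of s y "\<lambda>s. \<kappa> * y s - \<eta>^2 * ps s" "\<lambda>_. 1" "\<lambda>_. 0"])
    fix u assume u: "0 \<le> u" "u \<le> s"
    show "0 \<le> \<kappa> * y u - \<eta>^2 * ps u"
    proof -
      have "0 \<le> \<kappa> * y u" using y_nonneg[of u] kap by simp
      moreover have "0 \<le> \<eta>^2 * (- ps u)" by (intro mult_nonneg_nonneg) (use S1[of u] u in auto)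
      ultimately show ?thesis by simp
    qed
  qed (use s y_deriv y0 in auto)
  then show ?thesis by simp
qed

lemma S3: "0 \<le> s \<Longrightarrow> k * s \<le> - ps s"
proof -
  assume s: "0 \<le> s"
  show ?thesis
  proof (rule cmp_deriv[of s "\<lambda>s. - ps s" zd "\<lambda>s. k * s" "\<lambda>_. k"])
    fix u assume u: "0 \<le> u" "u \<le> s"
    have "k * 1 \<le> k * y u" using S2[of u] u k_nonneg by (intro mult_left_mono) auto
    then show "k \<le> zd u" using zd_lower[of u] by simp
  qed (use s zz_deriv ps0 in \<open>auto intro!: derivative_eq_intros\<close>)
qed

lemma S4: "0 \<le> s \<Longrightarrow> 1 + \<eta>^2 * k * s^2 / 2 \<le> y s"
proof -
  assume s: "0 \<le> s"
  show ?thesis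
  proof (rule cmp_deriv[of s y "\<lambda>s. \<kappa> * y s - \<eta>^2 * ps s" "\<lambda>s. 1 + \<eta>^2 * k * s^2 / 2" "\<lambda>s. \<eta>^2 * k * s"])
    fix u assume u: "0 \<le> u" "u \<le> s"
    have "\<eta>^2 * (k * u) \<le> \<eta>^2 * (- ps u)" using S3[of u] u by (intro mult_left_mono) auto
    then have a: "\<eta>^2 * k * u + \<eta>^2 * ps u \<le> 0" by (simp add: algebra_simps)
    have b: "0 \<le> \<kappa> * y u" using y_nonneg[of u] kap by simp
    show "\<eta>^2 * k * u \<le> \<kappa> * y u - \<eta>^2 * ps u" using a b by linarith
  next
    fix u show "((\<lambda>s. 1 + \<eta>^2 * k * s^2 / 2) has_real_derivative \<eta>^2 * k * u) (at u)"
      by (auto intro!: derivative_eq_intros)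
  qed (use s y_deriv y0 in auto)
qed

lemma S5: "0 \<le> s \<Longrightarrow> k * s + \<eta>^2 * k^2 * s^3 / 6 \<le> - ps s"
proof -
  assume s: "0 \<le> s"
  show ?thesis
  proof (rule cmp_deriv[of s "\<lambda>s. - ps s" zd "\<lambda>s. k * s + \<eta>^2 * k^2 * s^3 / 6" "\<lambda>s. k * (1 + \<eta>^2 * k * s^2 / 2)"])
    fix u assume u: "0 \<le> u" "u \<le> s"
    have "k * (1 + \<eta>^2 * k * u^2 / 2) \<le> k * y u" using S4[of u] u k_nonneg by (intro mult_left_mono) auto
    then show "k * (1 + \<eta>^2 * k * u^2 / 2) \<le> zd u" using zd_lower[of u] by simp
  next
    fix u show "((\<lambda>s. k * s + \<eta>^2 * k^2 * s^3 / 6) has_real_derivative k * (1 + \<eta>^2 * k * u^2 / 2)) (at u)"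
      by (auto intro!: derivative_eq_intros simp: field_simps power2_eq_square)
  qed (use s zz_deriv ps0 in auto)
qed

lemma S6: "0 \<le> s \<Longrightarrow> 1 + \<eta>^2 * k * s^2 / 2 + \<eta>^4 * k^2 * s^4 / 24 \<le> y s"
proof -
  assume s: "0 \<le> s"
  show ?thesis
  proof (rule cmp_deriv[of s y "\<lambda>s. \<kappa> * y s - \<eta>^2 * ps s" "\<lambda>s. 1 + \<eta>^2 * k * s^2 / 2 + \<eta>^4 * k^2 * s^4 / 24"
        "\<lambda>s. \<eta>^2 * (k * s + \<eta>^2 * k^2 * s^3 / 6)"])
    fix u assume u: "0 \<le> u" "u \<le> s"
    have "\<eta>^2 * (k * u + \<eta>^2 * k^2 * u^3 / 6) \<le> \<eta>^2 * (- ps u)" using S5[of u] u by (intro mult_left_mono) auto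
    then have a: "\<eta>^2 * (k * u + \<eta>^2 * k^2 * u^3 / 6) + \<eta>^2 * ps u \<le> 0" by (simp add: algebra_simps)
    have b: "0 \<le> \<kappa> * y u" using y_nonneg[of u] kap by simp
    show "\<eta>^2 * (k * u + \<eta>^2 * k^2 * u^3 / 6) \<le> \<kappa> * y u - \<eta>^2 * ps u" using a b by linarith
  next
    fix u show "((\<lambda>s. 1 + \<eta>^2 * k * s^2 / 2 + \<eta>^4 * k^2 * s^4 / 24) has_real_derivative \<eta>^2 * (k * u + \<eta>^2 * k^2 * u^3 / 6)) (at u)"
      by (auto intro!: derivative_eq_intros simp: field_simps eval_nat_numeral)
  qed (use s y_deriv y0 in auto)
qed

end

lemma psqrt_sq: "(psqrt z)^2 = z"
proof -
  have c: "cis (parg z) = cis (Arg z)"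
    unfolding parg_def by (auto simp: complex_eq_iff)
  have "(psqrt z)^2 = of_real (sqrt (cmod z))^2 * (cis (parg z / 2) * cis (parg z / 2))"
    unfolding psqrt_def by (simp add: power2_eq_square algebra_simps)
  also have "\<dots> = of_real (cmod z) * cis (Arg z)"
    by (simp add: cis_mult c flip: of_real_power)
  also have "\<dots> = z" using rcis_cmod_Arg[of z] by (simp add: rcis_def)
  finally show ?thesis .
qed

lemma psqrt_Re: "0 \<le> Re (psqrt z)"
proof -
  have "-pi \<le> parg z" "parg z \<le> pi" unfolding parg_def using Arg_bounded[of z] by auto
  then have "0 \<le> cos (parg z / 2)" by (intro cos_ge_zero) auto
  then show ?thesis unfolding psqrt_def by simp
qed



lemma cf_bound:
  fixes v0 \<kappa> \<theta> \<eta> \<rho> t \<xi> :: real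
  assumes "v0 \<ge> 0" and kap: "\<kappa> > 0" and eta: "\<eta> > 0" and rho: "\<bar>\<rho>\<bar> < 1" and t: "t > 0"
  shows "\<exists>Y. 1 + \<eta>^4*(1-\<bar>\<rho>\<bar>)^2*t^4/96 * \<xi>^4 \<le> Y \<and>
     cmod (heston_cf v0 \<kappa> \<theta> \<eta> \<rho> t \<xi>) \<le> exp (\<kappa>*\<theta>/\<eta>^2*(\<kappa>*t)) * Y powr (-(\<kappa>*\<theta>/\<eta>^2))"
proof -
  define \<beta> where "\<beta> = heston_beta \<kappa> \<eta> \<rho> \<xi>"
  define D where "D = heston_D \<kappa> \<eta> \<rho> \<xi>"
  define w where "w = Complex (\<xi>^2) \<xi>"
  have beta: "\<beta> = Complex \<kappa> (-(\<eta>*\<rho>*\<xi>))"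
    unfolding \<beta>_def heston_beta_def by (simp add: complex_eq_iff)
  have Z: "\<beta>^2 - 4 * of_real (heston_gamma \<eta>) * heston_alpha \<xi> = \<beta>^2 + of_real(\<eta>^2)*w"
    unfolding heston_gamma_def heston_alpha_def w_def by (simp add: complex_eq_iff power2_eq_square algebra_simps)
  have D2: "D^2 = \<beta>^2 + of_real(\<eta>^2)*w"
    unfolding D_def heston_D_def \<beta>_def[symmetric] Z by (rule psqrt_sq)
  have "\<rho>^2 \<le> 1" using rho by (simp add: abs_le_square_iff[symmetric] abs_square_le_1)
  then have "0 \<le> \<eta>^2*\<xi>^2*(1-\<rho>^2)" by simp
  moreover have "Re (\<beta>^2 + of_real(\<eta>^2)*w) = \<kappa>*\<kappa> + \<eta>^2*\<xi>^2*(1-\<rho>^2)"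
    unfolding beta w_def by (simp add: power2_eq_square algebra_simps)
  moreover have "0 < \<kappa>*\<kappa>" using kap by simp
  ultimately have ReZ: "Re (\<beta>^2 + of_real(\<eta>^2)*w) > 0" by linarith
  have Dnz: "D \<noteq> 0"
  proof
    assume "D = 0"
    then have "\<beta>^2 + of_real(\<eta>^2)*w = 0" using D2 by simp
    then have "Re (\<beta>^2 + of_real(\<eta>^2)*w) = 0" by (metis zero_complex.sel(1))
    with ReZ show False by linarith
  qed
  interpret H: hp \<kappa> \<eta> \<rho> \<xi> \<beta> D w
    by unfold_locales (use eta kap rho beta w_def D2 Dnz in auto)
  have ReD: "0 \<le> Re D" unfolding D_def heston_D_def by (rule psqrt_Re)
  have bD: "\<beta> + D \<noteq> 0" using ReD kap H.Reb by (metis add_pos_nonneg plus_complex.sel(1) zero_complex.sel(1) less_irrefl)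
  define e1 where "e1 = exp (D * of_real t / 2)"
  define e2 where "e2 = exp (-(D * of_real t / 2))"
  have e12: "e1 * e2 = 1" unfolding e1_def e2_def by (simp add: exp_minus)
  have e1nz: "e1 \<noteq> 0" "e2 \<noteq> 0" unfolding e1_def e2_def by auto
  have eDt: "exp (D * of_real t) = e1 * e1" unfolding e1_def by (subst mult_exp_exp) simp
  have emDt: "exp (- D * of_real t) = e2 * e2" unfolding e2_def by (subst mult_exp_exp) simp
  have e2i: "e2 = 1/e1" using e12 e1nz by (simp add: field_simps)
  define Rt where "Rt = H.R t"
  have Rt: "Rt = ((\<beta>+D)*e1 - (\<beta>-D)*e2)/(2*D)" unfolding Rt_def H.R_def H.Rf_def e1_def e2_def by simp
  have Pt: "H.P t = -w*(e1 - e2)/(2*D)" unfolding H.P_def H.Pf_def e1_def e2_def by simp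
  have y6: "1 + \<eta>^2 * H.k * t^2 / 2 + \<eta>^4 * H.k^2 * t^4 / 24 \<le> H.y t" using H.S6 t by simp
  have "0 \<le> \<eta>^2 * H.k * t^2 / 2" using H.k_nonneg by simp
  moreover have "\<eta>^4 * H.k^2 * t^4 / 24 = \<eta>^4*(1-\<bar>\<rho>\<bar>)^2*t^4/96 * \<xi>^4"
    unfolding H.k_def by (simp add: field_simps eval_nat_numeral)
  ultimately have yL: "1 + \<eta>^4*(1-\<bar>\<rho>\<bar>)^2*t^4/96 * \<xi>^4 \<le> H.y t" using y6 by linarith
  have y1: "1 \<le> H.y t" using H.S2 t by simp
  have cmR: "cmod Rt = sqrt (H.y t)" unfolding Rt_def H.y_def by (simp add: cmod_def)
  have Rnz: "Rt \<noteq> 0" using y1 cmR by auto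
  define G where "G = heston_G \<kappa> \<eta> \<rho> \<xi>"
  have G: "G = (\<beta>-D)/(\<beta>+D)" unfolding G_def heston_G_def \<beta>_def D_def ..
  have oG: "1 - G = 2*D/(\<beta>+D)" unfolding G using bD by (simp add: field_simps)
  have X: "(exp (D * of_real t) - G)/(1 - G) = e1 * Rt"
  proof -
    have "(exp (D * of_real t) - G)/(1 - G) = (e1*e1 - G) * (\<beta>+D) / (2*D)"
      unfolding eDt oG by simp
    also have "(e1*e1 - G) * (\<beta>+D) = (\<beta>+D)*(e1*e1) - (\<beta>-D)"
      unfolding G using bD by (simp add: field_simps)
    also have "((\<beta>+D)*(e1*e1) - (\<beta>-D)) / (2*D) = e1 * Rt"
      unfolding Rt e2i using Dnz e1nz by (simp add: field_simps)
    finally show ?thesis .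
  qed
  have A: "heston_A \<kappa> \<theta> \<eta> \<rho> \<xi> t = of_real(\<kappa>*\<theta>/\<eta>^2) * ((\<beta>+D)* of_real t - 2*plog(e1*Rt))"
    unfolding heston_A_def Let_def \<beta>_def[symmetric] D_def[symmetric] G_def[symmetric] X ..
  have cme1: "cmod e1 = exp (Re D * t / 2)" unfolding e1_def by simp
  have lnX: "ln (cmod (e1 * Rt)) = Re D * t / 2 + ln (H.y t) / 2"
    unfolding norm_mult cme1 cmR using y1 by (simp add: ln_mult ln_sqrt)
  have ReA: "Re (heston_A \<kappa> \<theta> \<eta> \<rho> \<xi> t) = \<kappa>*\<theta>/\<eta>^2 * (\<kappa>*t - ln (H.y t))"
  proof -
    have lnX': "ln (cmod (Rt * e1)) = Re D * t / 2 + ln (H.y t) / 2" using lnX by (simp add: mult.commute)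
    have "\<eta>^2 \<noteq> 0" using eta by simp
    then show ?thesis unfolding A plog_def using H.Reb by (simp add: lnX lnX' field_simps)
  qed
  have den: "(\<beta>+D) - (\<beta>-D)*(e2*e2) \<noteq> 0"
  proof -
    have "(\<beta>+D) - (\<beta>-D)*(e2*e2) = 2*D*e2*Rt" unfolding Rt e2i using Dnz e1nz
      by (simp add: field_simps)
    then show ?thesis using Dnz e1nz Rnz by simp
  qed
  have B: "heston_B \<kappa> \<eta> \<rho> \<xi> t = H.P t / Rt"
  proof -
    have "heston_B \<kappa> \<eta> \<rho> \<xi> t = (\<beta> - D) / of_real (\<eta>^2) * ((1 - e2*e2) / (1 - G * (e2*e2)))"
      unfolding heston_B_def Let_def \<beta>_def[symmetric] D_def[symmetric] G_def[symmetric] emDt ..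
    also have "\<dots> = H.P t / Rt"
    proof -
      define N where "N = (\<beta>+D) - (\<beta>-D)*(e2*e2)"
      have Nnz: "N \<noteq> 0" using den N_def by simp
      have e1i: "e1 = 1/e2" using e12 e1nz by (simp add: field_simps)
      have s1: "1 - G*(e2*e2) = N/(\<beta>+D)" unfolding G N_def using bD by (simp add: field_simps)
      have l: "(\<beta> - D) / of_real (\<eta>^2) * ((1 - e2*e2) / (1 - G * (e2*e2)))
          = (\<beta>-D)*(\<beta>+D)*(1-e2*e2)/(of_real(\<eta>^2)*N)"
        unfolding s1 using bD Nnz eta by (simp add: field_simps)
      have Rt2: "Rt = N / (2*D*e2)" unfolding Rt N_def e1i using Dnz e1nz by (simp add: field_simps)
      have mw: "-w = (\<beta>-D)*(\<beta>+D)/of_real(\<eta>^2)" unfolding H.w_eq using eta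
        by (simp add: field_simps power2_eq_square)
      have Pt2: "H.P t = -w*(1-e2*e2)/(2*D*e2)" unfolding Pt e1i using Dnz e1nz by (simp add: field_simps)
      have "H.P t / Rt = -w*(1-e2*e2)/N" unfolding Pt2 Rt2 using Dnz e1nz Nnz by (simp add: field_simps)
      also have "\<dots> = (\<beta>-D)*(\<beta>+D)*(1-e2*e2)/(of_real(\<eta>^2)*N)" unfolding mw using Nnz eta
        by (simp add: field_simps)
      finally show ?thesis using l by simp
    qed
    finally show ?thesis .
  qed
  have ReB: "Re (heston_B \<kappa> \<eta> \<rho> \<xi> t) = H.ps t / H.y t"
    unfolding B Re_divide Rt_def H.ps_def H.y_def ..
  have ps0: "H.ps t \<le> 0" using H.S1[of t] t by simp
  have "H.ps t / H.y t \<le> 0" using ps0 y1 by (simp add: divide_nonpos_pos)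
  then have "H.ps t / H.y t * v0 \<le> 0" using assms(1) mult_nonpos_nonneg by blast
  then have "cmod (heston_cf v0 \<kappa> \<theta> \<eta> \<rho> t \<xi>) \<le> exp (Re (heston_A \<kappa> \<theta> \<eta> \<rho> \<xi> t))"
    unfolding heston_cf_def norm_exp_eq_Re using ReB by simp
  also have "\<dots> = exp (\<kappa>*\<theta>/\<eta>^2*(\<kappa>*t)) * H.y t powr (-(\<kappa>*\<theta>/\<eta>^2))"
    unfolding ReA powr_def using y1 by (simp add: diff_divide_distrib right_diff_distrib flip: exp_add)
  finally have fin: "cmod (heston_cf v0 \<kappa> \<theta> \<eta> \<rho> t \<xi>) \<le> exp (\<kappa>*\<theta>/\<eta>^2*(\<kappa>*t)) * H.y t powr (-(\<kappa>*\<theta>/\<eta>^2))" .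
  show ?thesis by (rule exI[where x="H.y t"], rule conjI[OF yL fin])

qed

lemma cis_meas[measurable]: "cis \<in> borel_measurable borel"
  by (intro borel_measurable_continuous_onI continuous_intros)

lemma parg_meas[measurable]: "parg \<in> borel_measurable borel"
  unfolding parg_def[abs_def] Arg_def[abs_def] by measurable
lemma psqrt_meas[measurable]: "psqrt \<in> borel_measurable borel"
  unfolding psqrt_def[abs_def] by measurable
lemma plog_meas[measurable]: "plog \<in> borel_measurable borel"
  unfolding plog_def[abs_def] by measurable
lemma cf_meas[measurable]: "heston_cf v0 \<kappa> \<theta> \<eta> \<rho> t \<in> borel_measurable lborel"
  unfolding heston_cf_def[abs_def] heston_A_def heston_B_def heston_G_def heston_D_def heston_beta_def
   heston_alpha_def Let_def by measurable

lemma decay: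
  fixes Y L \<xi> :: real
  assumes L: "L > 0" and Y: "1 + L * \<xi>^4 \<le> Y"
  shows "Y powr (-(1/2)) \<le> sqrt (2*(1+1/L)) / (1 + \<xi>^2)"
proof -
  have "0 \<le> L * \<xi>^4" using L by simp
  then have Ypos: "0 < Y" using Y by linarith
  have a: "(1+\<xi>^2)^2 \<le> 2*(1+\<xi>^4)"
  proof -
    have "0 \<le> (1-\<xi>^2)^2" by simp
    then show ?thesis by (simp add: power2_eq_square algebra_simps eval_nat_numeral)
  qed
  have b: "1 + \<xi>^4 \<le> (1+1/L) * Y"
  proof -
    have "(1+1/L) * (1 + L*\<xi>^4) = 1 + \<xi>^4 + L*\<xi>^4 + 1/L" using L by (simp add: field_simps)
    moreover have "(1+1/L) * (1 + L*\<xi>^4) \<le> (1+1/L) * Y" using Y L by (intro mult_left_mono) auto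
    moreover have "0 \<le> L*\<xi>^4" "0 \<le> 1/L" using L by auto
    ultimately show ?thesis by linarith
  qed
  have "2*(1+\<xi>^4) \<le> 2*((1+1/L) * Y)" using b by (rule mult_left_mono) simp
  then have "(1+\<xi>^2)^2 \<le> 2*((1+1/L) * Y)" by (rule order_trans[OF a])
  then have "(1+\<xi>^2)^2 \<le> (2*(1+1/L)) * Y" by (simp only: mult.assoc)
  then have "sqrt ((1+\<xi>^2)^2) \<le> sqrt (2*(1+1/L)) * sqrt Y"
    by (metis real_sqrt_le_mono real_sqrt_mult)
  then have c: "1+\<xi>^2 \<le> sqrt (2*(1+1/L)) * sqrt Y" by simp
  have "Y powr (-(1/2)) = inverse (sqrt Y)" using Ypos by (simp add: powr_minus powr_half_sqrt)
  also have "\<dots> \<le> sqrt (2*(1+1/L)) / (1 + \<xi>^2)"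
    using c Ypos by (simp add: field_simps add_pos_nonneg)
  finally show ?thesis .
qed

theorem mainTheorem5:
  fixes v0 \<kappa> \<theta> \<eta> \<rho> t :: real and p :: ennreal
  assumes "v0 > 0" and "\<kappa> > 0" and "\<theta> > 0" and "\<eta> > 0"
    and "2 * \<kappa> * \<theta> > \<eta>\<^sup>2"
    and "-1 < \<rho>" and "\<rho> < 1"
    and "t > 0"
    and "1 \<le> p"
  shows "memLp p (heston_cf v0 \<kappa> \<theta> \<eta> \<rho> t)"
proof -
  define c1 where "c1 = \<kappa>*\<theta>/\<eta>^2"
  define K where "K = exp (\<kappa>*\<theta>/\<eta>^2*(\<kappa>*t))"
  define L where "L = \<eta>^4*(1-\<bar>\<rho>\<bar>)^2*t^4/96"
  define f where "f = heston_cf v0 \<kappa> \<theta> \<eta> \<rho> t"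
  have rho: "\<bar>\<rho>\<bar> < 1" using assms by auto
  have Lpos: "L > 0" unfolding L_def using rho assms by simp
  have c1: "c1 > 1/2" unfolding c1_def using assms by (simp add: field_simps)
  have Kpos: "K > 0" unfolding K_def by simp
  have bnd: "\<exists>Y. 1 + L * \<xi>^4 \<le> Y \<and> cmod (f \<xi>) \<le> K * Y powr (-c1)" for \<xi>
    unfolding f_def K_def L_def c1_def by (rule cf_bound) (use assms rho in auto)
  have fm: "f \<in> borel_measurable lborel" unfolding f_def by measurable
  show ?thesis
  proof (cases p)
    case top
    have "cmod (f \<xi>) \<le> K" for \<xi>
    proof -
      obtain Y where Y: "1 + L * \<xi>^4 \<le> Y" "cmod (f \<xi>) \<le> K * Y powr (-c1)" using bnd by blast
      have "0 \<le> L * \<xi>^4" using Lpos by simp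
      then have "1 \<le> Y" using Y(1) by linarith
      then have "Y powr (-c1) \<le> Y powr 0" using c1 by (intro powr_mono) auto
      then have "Y powr (-c1) \<le> 1" using \<open>1 \<le> Y\<close> by simp
      then have "K * Y powr (-c1) \<le> K * 1" using Kpos by (intro mult_left_mono) auto
      then show ?thesis using Y(2) by simp
    qed
    then show ?thesis unfolding memLp_def f_def[symmetric] using top fm by auto
  next
    case (real r)
    have r1: "1 \<le> r" using assms(9) real by simp
    define M where "M = K powr r * sqrt (2*(1+1/L))"
    have bd: "cmod (f \<xi>) powr r \<le> M * inverse (1 + \<xi>^2)" for \<xi>
    proof -
      obtain Y where Y: "1 + L * \<xi>^4 \<le> Y" "cmod (f \<xi>) \<le> K * Y powr (-c1)" using bnd by blast
      have "0 \<le> L * \<xi>^4" using Lpos by simp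
      then have Y1: "1 \<le> Y" using Y(1) by linarith
      have "cmod (f \<xi>) powr r \<le> (K * Y powr (-c1)) powr r"
        using Y(2) r1 by (intro powr_mono2) auto
      also have "\<dots> = K powr r * Y powr (-(c1*r))"
        using Kpos Y1 by (simp add: powr_mult powr_powr)
      also have "Y powr (-(c1*r)) \<le> Y powr (-(1/2))"
      proof -
        have "c1 * 1 \<le> c1 * r" using c1 r1 by (intro mult_left_mono) auto
        then have "1/2 \<le> c1 * r" using c1 by linarith
        then show ?thesis using Y1 by (intro powr_mono) auto
      qed
      then have "K powr r * Y powr (-(c1*r)) \<le> K powr r * Y powr (-(1/2))" by (simp add: mult_left_mono)
      also have "\<dots> \<le> K powr r * (sqrt (2*(1+1/L)) / (1 + \<xi>^2))"
        using decay[OF Lpos Y(1)] by (rule mult_left_mono) simp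
      finally show ?thesis unfolding M_def by (simp add: divide_inverse mult.assoc)
    qed
    have "integrable lborel (\<lambda>x::real. inverse (1 + x^2))"
    proof -
      have "set_integrable lborel (einterval (-\<infinity>) \<infinity>) (\<lambda>x::real. inverse (1 + x^2))"
        by (rule integrable_inverse_1_plus_square)
      moreover have "einterval (-\<infinity>) \<infinity> = (UNIV :: real set)" by (auto simp: einterval_def)
      ultimately show ?thesis by (simp add: set_integrable_def)
    qed
    then have I: "integrable lborel (\<lambda>x::real. M * inverse (1 + x^2))" by simp
    have "integrable lborel (\<lambda>x. cmod (f x) powr r)"
    proof (rule Bochner_Integration.integrable_bound[OF I])
      note fm[measurable]
      show "(\<lambda>x. cmod (f x) powr r) \<in> borel_measurable lborel" by measurable
      show "AE x in lborel. norm (cmod (f x) powr r) \<le> norm (M * inverse (1 + x^2))"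
      proof (intro AE_I2)
        fix x :: real
        have "norm (cmod (f x) powr r) = cmod (f x) powr r" by simp
        also have "\<dots> \<le> M * inverse (1 + x^2)" by (rule bd)
        also have "\<dots> \<le> norm (M * inverse (1 + x^2))" by simp
        finally show "norm (cmod (f x) powr r) \<le> norm (M * inverse (1 + x^2))" .
      qed
    qed
    then show ?thesis unfolding memLp_def f_def[symmetric] using real fm by simp
  qed
qed

end
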